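(* Let $X$ be a set, $T:X\to X$ a map, and $G$ a finite group acting on $X$ such that $g\circ T=T\circ g$ for all $g\in G$. Let $x\in X$ be a periodic point of $T$. Then the number of orbits that glue to $\mathfrak{O}_T(x)$ (including $\mathfrak{O}_T(x)$ itself) equals \[ \frac{|\mathfrak{O}_G(x)|}{|\mathfrak{O}_T(x)\cap\mathfrak{O}_G(x)|}. \]
   Context: For $x\in X$, $\mathfrak{O}_T(x)=\{T^j(x): j\geqslant 0\}$ is the (closed, i.e. finite) orbit of $x$ under $T$, and $\mathfrak{O}_G(x)=\{g(x):g\in G\}$ is the orbit of $x$ under $G$. Let $X'=G\backslash X$, $\pi:X\to X'$ the quotient map $\pi(x)=\mathfrak{O}_G(x)$, and $T':X'\to X'$ the induced map $T'(\mathfrak{O}_G(x))=\mathfrak{O}_G(T(x))$. The "orbits that glue to $\mathfrak{O}_T(x)$" are the distinct closed $T$-orbits $\mathfrak{O}_T(y)$, $y\in X$, which are mapped by $\pi$ onto the same $T'$-orbit as $\mathfrak{O}_T(x)$, i.e. with $\pi(\mathfrak{O}_T(y))=\pi(\mathfrak{O}_T(x))$. *)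

theory Defs
  imports Complex_Main "HOL-Algebra.Group_Action"
begin

definition T_orbit :: "('b \<Rightarrow> 'b) \<Rightarrow> 'b \<Rightarrow> 'b set" where
  "T_orbit T y = {(T ^^ j) y | j. True}"

definition periodic_pt :: "('b \<Rightarrow> 'b) \<Rightarrow> 'b \<Rightarrow> bool" where
  "periodic_pt T y \<longleftrightarrow> (\<exists>n>0. (T ^^ n) y = y)"

text \<open>Image of a set under the quotient map pi : X -> G\X, x |-> G-orbit of x.\<close>
definition quot_image :: "_ \<Rightarrow> ('a \<Rightarrow> 'b \<Rightarrow> 'b) \<Rightarrow> 'b set \<Rightarrow> 'b set set" where
  "quot_image G \<phi> S = (\<lambda>z. orbit G \<phi> z) ` S"

definition glued_orbits :: "_ \<Rightarrow> 'b set \<Rightarrow> ('a \<Rightarrow> 'b \<Rightarrow> 'b) \<Rightarrow> ('b \<Rightarrow> 'b) \<Rightarrow> 'b \<Rightarrow> 'b set set" where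
  "glued_orbits G E \<phi> T x =
     {T_orbit T y | y. y \<in> E \<and> periodic_pt T y \<and>
        quot_image G \<phi> (T_orbit T y) = quot_image G \<phi> (T_orbit T x)}"

end

theory Submission
  imports Defs
begin

lemma funpow_in: "T ` E \<subseteq> E \<Longrightarrow> y \<in> E \<Longrightarrow> (T ^^ j) y \<in> E"
  by (induction j) auto

lemma Tor_self: "z \<in> T_orbit T z"
  unfolding T_orbit_def by (auto intro: exI[of _ 0])

lemma Tor_sub: "w \<in> T_orbit T z \<Longrightarrow> T_orbit T w \<subseteq> T_orbit T z"
proof
  fix u assume "w \<in> T_orbit T z" "u \<in> T_orbit T w"
  then obtain i j where "w = (T ^^ i) z" "u = (T ^^ j) w" unfolding T_orbit_def by blast
  then have "u = (T ^^ (j + i)) z" by (simp add: funpow_add)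
  then show "u \<in> T_orbit T z" unfolding T_orbit_def by blast
qed

lemma per_mult: "(T ^^ n) z = z \<Longrightarrow> (T ^^ (m * n)) z = z"
proof (induction m)
  case (Suc m)
  have "(T ^^ (Suc m * n)) z = (T ^^ n) ((T ^^ (m * n)) z)"
    by (simp add: funpow_add)
  then show ?case using Suc by simp
qed simp

lemma per_back:
  assumes "periodic_pt T z" "w \<in> T_orbit T z"
  shows "z \<in> T_orbit T w"
proof -
  obtain n where n: "n > 0" "(T ^^ n) z = z" using assms(1) unfolding periodic_pt_def by blast
  obtain i where i: "w = (T ^^ i) z" using assms(2) unfolding T_orbit_def by blast
  have "i \<le> i * n" using n by simp
  have "(T ^^ (i * n - i)) w = (T ^^ (i * n - i + i)) z" by (simp add: i funpow_add)
  also have "i * n - i + i = i * n" using \<open>i \<le> i * n\<close> by simp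
  also have "(T ^^ (i * n)) z = z" using per_mult[OF n(2)] by simp
  finally show ?thesis unfolding T_orbit_def by blast
qed

lemma Tor_eq: "periodic_pt T z \<Longrightarrow> w \<in> T_orbit T z \<Longrightarrow> T_orbit T w = T_orbit T z"
  using Tor_sub per_back by (metis subset_antisym)

context group_action
begin

lemma orbit_closed: "x \<in> E \<Longrightarrow> w \<in> orbit G \<phi> x \<Longrightarrow> w \<in> E"
  unfolding orbit_def using element_image by blast

lemma orbit_eq: assumes "w \<in> E" "g \<in> carrier G" shows "orbit G \<phi> (\<phi> g w) = orbit G \<phi> w"
proof -
  have gw: "\<phi> g w \<in> E" "\<phi> g w \<in> orbit G \<phi> w" using assms element_image unfolding orbit_def by auto
  have w2: "w \<in> orbit G \<phi> (\<phi> g w)" using orbit_sym gw assms by blast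
  show ?thesis
  proof
    show "orbit G \<phi> (\<phi> g w) \<subseteq> orbit G \<phi> w"
      using orbit_trans[OF assms(1) gw(1) _ gw(2)] orbit_closed gw by blast
    show "orbit G \<phi> w \<subseteq> orbit G \<phi> (\<phi> g w)"
      using orbit_trans[OF gw(1) assms(1) _ w2] orbit_closed assms by blast
  qed
qed

lemma orbit_eq_mem: assumes "x \<in> E" "w \<in> orbit G \<phi> x" shows "orbit G \<phi> w = orbit G \<phi> x"
proof -
  obtain g where "g \<in> carrier G" "w = \<phi> g x" using assms(2) unfolding orbit_def by blast
  then show ?thesis using orbit_eq assms(1) by simp
qed

end

theorem lemma5:
  fixes G (structure) and E :: "'b set" and \<phi> :: "'a \<Rightarrow> 'b \<Rightarrow> 'b" and T :: "'b \<Rightarrow> 'b"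
  assumes "group_action G E \<phi>"
    and "finite (carrier G)"
    and "T ` E \<subseteq> E"
    and "\<forall>g \<in> carrier G. \<forall>y \<in> E. \<phi> g (T y) = T (\<phi> g y)"
    and "x \<in> E"
    and "periodic_pt T x"
  shows "real (card (glued_orbits G E \<phi> T x)) =
         real (card (orbit G \<phi> x)) / real (card (T_orbit T x \<inter> orbit G \<phi> x))"
proof -
  interpret group_action G E \<phi> by fact
  interpret grp: group G using group_hom group_hom.axioms(1) by auto
  define Ob where "Ob = orbit G \<phi> x"
  define C where "C = T_orbit T"
  define K where "K = T_orbit T x \<inter> Ob"
  have comm: "\<phi> g ((T ^^ j) y) = (T ^^ j) (\<phi> g y)" if "g \<in> carrier G" "y \<in> E" for g y j
    using that
  proof (induction j)
    case (Suc j)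
    have "(T ^^ j) y \<in> E" using funpow_in[OF assms(3) Suc.prems(2)] .
    then show ?case using Suc assms(4) by simp
  qed simp
  have TinE: "(T ^^ j) y \<in> E" if "y \<in> E" for y j using funpow_in[OF assms(3) that] .
  obtain n where n: "n > 0" "(T ^^ n) x = x" using assms(6) unfolding periodic_pt_def by blast
  have gper: "periodic_pt T (\<phi> g x)" if "g \<in> carrier G" for g
    unfolding periodic_pt_def using n comm[OF that assms(5), of n] by metis
  have finO: "finite Ob" unfolding Ob_def orbit_def using assms(2)
    by (simp add: setcompr_eq_image)
  have OE: "z \<in> E" if "z \<in> Ob" for z using that orbit_closed[OF assms(5)] Ob_def by blast
  have ObI: "\<phi> g x \<in> Ob" if "g \<in> carrier G" for g using that unfolding Ob_def orbit_def by blast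
  have ObE: "\<exists>g\<in>carrier G. z = \<phi> g x" if "z \<in> Ob" for z using that unfolding Ob_def orbit_def by blast
  have CObE: "\<exists>g\<in>carrier G. c = C (\<phi> g x)" if cin: "c \<in> C ` Ob" for c
  proof -
    obtain z where "z \<in> Ob" "c = C z" using cin by blast
    then show ?thesis using ObE by blast
  qed
  have Cself: "z \<in> C z" for z unfolding C_def by (rule Tor_self)
  have Ceq: "C w = C (\<phi> g x)" if "g \<in> carrier G" "w \<in> C (\<phi> g x)" for g w
    using Tor_eq[OF gper[OF that(1)]] that(2) unfolding C_def by simp
  have glued: "glued_orbits G E \<phi> T x = C ` Ob"
  proof
    show "glued_orbits G E \<phi> T x \<subseteq> C ` Ob"
    proof
      fix c assume "c \<in> glued_orbits G E \<phi> T x"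
      then obtain y where y: "c = C y" "y \<in> E" "periodic_pt T y"
        "quot_image G \<phi> (T_orbit T y) = quot_image G \<phi> (T_orbit T x)"
        unfolding glued_orbits_def C_def by blast
      have "orbit G \<phi> y \<in> quot_image G \<phi> (T_orbit T y)"
        unfolding quot_image_def by (rule imageI[OF Tor_self])
      then have "orbit G \<phi> y \<in> (\<lambda>z. orbit G \<phi> z) ` T_orbit T x"
        using y(4) unfolding quot_image_def by simp
      then obtain z where z: "z \<in> T_orbit T x" "orbit G \<phi> y = orbit G \<phi> z" by blast
      then obtain j where j: "orbit G \<phi> y = orbit G \<phi> ((T ^^ j) x)"
        unfolding T_orbit_def by blast
      have "y \<in> orbit G \<phi> ((T ^^ j) x)" using j orbit_refl y(2) by blast
      then obtain g where g: "g \<in> carrier G" "y = \<phi> g ((T ^^ j) x)"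
        unfolding orbit_def by blast
      have yy: "y = (T ^^ j) (\<phi> g x)" using g comm assms(5) by simp
      have gO: "\<phi> g x \<in> Ob" using ObI g by blast
      have "C y = C (\<phi> g x)" unfolding C_def
        by (rule Tor_eq[OF gper[OF g(1)]]) (auto simp: yy T_orbit_def)
      then show "c \<in> C ` Ob" using y(1) gO by blast
    qed
    show "C ` Ob \<subseteq> glued_orbits G E \<phi> T x"
    proof
      fix c assume "c \<in> C ` Ob"
      then obtain z where "z \<in> Ob" "c = C z" by blast
      then obtain g where g: "g \<in> carrier G" "c = C (\<phi> g x)"
        using ObE by blast
      have gE: "\<phi> g x \<in> E" using g element_image assms(5) by blast
      have "quot_image G \<phi> (T_orbit T (\<phi> g x)) = quot_image G \<phi> (T_orbit T x)"
        unfolding quot_image_def T_orbit_def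
      proof -
        have "(\<lambda>z. orbit G \<phi> z) ` {(T ^^ j) (\<phi> g x) |j. True}
            = (\<lambda>j. orbit G \<phi> ((T ^^ j) (\<phi> g x))) ` UNIV" by auto
        also have "\<dots> = (\<lambda>j. orbit G \<phi> ((T ^^ j) x)) ` UNIV"
          using comm[OF g(1) assms(5)] orbit_eq[OF TinE[OF assms(5)] g(1)] by simp
        also have "\<dots> = (\<lambda>z. orbit G \<phi> z) ` {(T ^^ j) x |j. True}" by auto
        finally show "(\<lambda>z. orbit G \<phi> z) ` {(T ^^ j) (\<phi> g x) |j. True} =
            (\<lambda>z. orbit G \<phi> z) ` {(T ^^ j) x |j. True}" .
      qed
      then show "c \<in> glued_orbits G E \<phi> T x"
        unfolding glued_orbits_def C_def using g gE gper[OF g(1)] by (auto simp: C_def)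
    qed
  qed
  define F where "F = (\<lambda>c. c \<inter> Ob) ` (C ` Ob)"
  have inj: "inj_on (\<lambda>c. c \<inter> Ob) (C ` Ob)"
  proof (rule inj_onI)
    fix c1 c2 assume c: "c1 \<in> C ` Ob" "c2 \<in> C ` Ob" and eq: "c1 \<inter> Ob = c2 \<inter> Ob"
    obtain g1 where g1: "g1 \<in> carrier G" "c1 = C (\<phi> g1 x)" using CObE[OF c(1)] by blast
    obtain g2 where g2: "g2 \<in> carrier G" "c2 = C (\<phi> g2 x)" using CObE[OF c(2)] by blast
    have "\<phi> g1 x \<in> c1 \<inter> Ob" using g1 Cself ObI by simp
    then have "\<phi> g1 x \<in> c2" using eq by blast
    then have "C (\<phi> g1 x) = C (\<phi> g2 x)" using Ceq[OF g2(1)] g2(2) by simp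
    then show "c1 = c2" using g1 g2 by simp
  qed
  have cardF: "card F = card (C ` Ob)" unfolding F_def using card_image[OF inj] .
  have unionF: "\<Union> F = Ob"
  proof
    show "\<Union> F \<subseteq> Ob" unfolding F_def by blast
    show "Ob \<subseteq> \<Union> F"
    proof
      fix z assume "z \<in> Ob"
      then have "z \<in> C z \<inter> Ob" "C z \<inter> Ob \<in> F" using Cself unfolding F_def by auto
      then show "z \<in> \<Union> F" by blast
    qed
  qed
  have cardeach: "card f = card K" if fin: "f \<in> F" for f
  proof -
    obtain c where c: "c \<in> C ` Ob" "f = c \<inter> Ob" using fin unfolding F_def by blast
    obtain g where g: "g \<in> carrier G" "f = C (\<phi> g x) \<inter> Ob"
      using CObE[OF c(1)] c(2) by blast
    have img: "\<phi> g ` K = C (\<phi> g x) \<inter> Ob"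
    proof
      show "\<phi> g ` K \<subseteq> C (\<phi> g x) \<inter> Ob"
      proof
        fix w assume "w \<in> \<phi> g ` K"
        then obtain j where j: "w = \<phi> g ((T ^^ j) x)" "(T ^^ j) x \<in> Ob"
          unfolding K_def T_orbit_def by blast
        have "w \<in> C (\<phi> g x)" using j(1) comm[OF g(1) assms(5)] unfolding C_def T_orbit_def by blast
        moreover have "w \<in> Ob"
        proof -
          have "orbit G \<phi> w = orbit G \<phi> ((T ^^ j) x)" using j(1) orbit_eq[OF TinE[OF assms(5)] g(1)] by simp
          also have "\<dots> = Ob" using j(2) unfolding Ob_def using orbit_eq_mem assms(5) by blast
          finally show ?thesis using orbit_refl[of w] j(1) element_image[OF g(1) TinE[OF assms(5)]] by blast
        qed
        ultimately show "w \<in> C (\<phi> g x) \<inter> Ob" by blast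
      qed
      show "C (\<phi> g x) \<inter> Ob \<subseteq> \<phi> g ` K"
      proof
        fix w assume w: "w \<in> C (\<phi> g x) \<inter> Ob"
        then obtain j where j: "w = (T ^^ j) (\<phi> g x)" unfolding C_def T_orbit_def by blast
        have w2: "w = \<phi> g ((T ^^ j) x)" using j comm[OF g(1) assms(5)] by simp
        have "orbit G \<phi> ((T ^^ j) x) = orbit G \<phi> w" using w2 orbit_eq[OF TinE[OF assms(5)] g(1)] by simp
        also have "\<dots> = Ob"
          using w unfolding Ob_def using orbit_eq_mem assms(5) by blast
        finally have "(T ^^ j) x \<in> Ob" using orbit_refl TinE[OF assms(5)] by blast
        then have "(T ^^ j) x \<in> K" unfolding K_def T_orbit_def by blast
        then show "w \<in> \<phi> g ` K" using w2 by blast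
      qed
    qed
    have KE: "K \<subseteq> E" unfolding K_def using OE by blast
    have "card (\<phi> g ` K) = card K" using card_image inj_on_subset[OF inj_prop[OF g(1)] KE] by blast
    then show ?thesis using img g(2) by simp
  qed
  have disj: "\<forall>c1\<in>F. \<forall>c2\<in>F. c1 \<noteq> c2 \<longrightarrow> c1 \<inter> c2 = {}"
  proof (intro ballI impI)
    fix c1 c2 assume c: "c1 \<in> F" "c2 \<in> F" "c1 \<noteq> c2"
    obtain d1 d2 where d: "d1 \<in> C ` Ob" "c1 = d1 \<inter> Ob" "d2 \<in> C ` Ob" "c2 = d2 \<inter> Ob"
      using c unfolding F_def by blast
    obtain g1 where g1: "g1 \<in> carrier G" "d1 = C (\<phi> g1 x)" using CObE[OF d(1)] by blast
    obtain g2 where g2: "g2 \<in> carrier G" "d2 = C (\<phi> g2 x)" using CObE[OF d(3)] by blast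
    have g: "g1 \<in> carrier G" "c1 = C (\<phi> g1 x) \<inter> Ob" "g2 \<in> carrier G" "c2 = C (\<phi> g2 x) \<inter> Ob"
      using g1 g2 d by auto
    show "c1 \<inter> c2 = {}"
    proof (rule ccontr)
      assume "c1 \<inter> c2 \<noteq> {}"
      then obtain w where "w \<in> C (\<phi> g1 x)" "w \<in> C (\<phi> g2 x)" using g by blast
      then have "C (\<phi> g1 x) = C (\<phi> g2 x)" using Ceq g by metis
      then show False using c g by simp
    qed
  qed
  have finF: "finite F" unfolding F_def using finO by simp
  have "card K * card F = card (\<Union> F)"
  proof (rule card_partition[OF finF])
    show "finite (\<Union> F)" using finO unionF by simp
    show "\<And>c. c \<in> F \<Longrightarrow> card c = card K" using cardeach by blast
    show "\<And>c1 c2. c1 \<in> F \<Longrightarrow> c2 \<in> F \<Longrightarrow> c1 \<noteq> c2 \<Longrightarrow> c1 \<inter> c2 = {}" using disj by blast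
  qed
  then have main: "card K * card (C ` Ob) = card Ob" using cardF unionF by simp
  have "x \<in> K" unfolding K_def Ob_def using Tor_self[of x T] orbit_refl[OF assms(5)] by (simp add: IntI)
  moreover have "finite K" unfolding K_def using finO by simp
  ultimately have "card K > 0" using card_gt_0_iff by blast
  then show ?thesis using main glued unfolding K_def Ob_def C_def
    by (simp add: field_simps flip: of_nat_mult)
qed

end
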